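(* Let $F=f+\mu c$ with $\mu>0$, $f:\mathbb{R}^n\to\mathbb{R}$ convex and continuously differentiable with $L$-Lipschitz gradient, and $c:\mathbb{R}^n\to\mathbb{R}$ convex. Let $0<\tau_{\min}\le\tau_k\le\tau_{\max}<\infty$, let $d_k=\mathscr{P}_c(x_k-\tau_k\nabla f(x_k),\mu\tau_k)-x_k\neq0$, and let $\alpha_k\in(0,1]$ satisfy, with some $\theta>0$, both $\nu(\alpha_k)|1-\lambda(\alpha_k)|\ge\theta$ and $F_{k+1}-R_k\ge-\frac{\alpha_k^2}{2}L\|d_k\|^2+\alpha_k\Delta_k$, where $x_{k+1}=x_k+\alpha_kd_k$. Then $$\frac{F_k-F_{k+1}}{\|d_k\|^2}\ \ge\ \frac{\theta}{2L\tau_{\max}^2}>0 .$$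
   Context: Notation: $h_k=h(x_k)$, $\nabla h_k=\nabla h(x_k)$; $\mathscr{P}_c(x,\vartheta)=\operatorname{argmin}_y\{\vartheta c(y)+\frac12\|x-y\|^2\}$. $\Delta_k=d_k^T\nabla f_k+\mu(c(x_k+d_k)-c_k)$. Reference value: for an integer $N>0$, $m(0)=0$, $0\le m(k)\le\min\{m(k-1)+1,N-1\}$, $F_{l(k)}=\max_{0\le j\le m(k)}F_{k-j}$, and $R_k=\eta_kF_{l(k)}+(1-\eta_k)F_k$ with $\eta_k\in[0,1]$. Quotients: $\nu(\alpha_k)=\frac{F_{k+1}-F_k}{\alpha_k\Delta_k}$, $\lambda(\alpha_k)=\frac{F_{k+1}-R_k}{\alpha_k\Delta_k}$. *)

theory Defs
  imports "HOL-Analysis.Analysis"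
begin

text \<open>Proximal operator: P_c(x, theta) = argmin_y { theta * c y + 1/2 * norm (x - y)^2 }.
  For convex finite-valued c and theta > 0 the minimizer exists and is unique.\<close>
definition prox :: "('a::real_normed_vector \<Rightarrow> real) \<Rightarrow> 'a \<Rightarrow> real \<Rightarrow> 'a" where
  "prox c x t = (SOME y. \<forall>z. t * c y + (1/2) * (norm (x - y))\<^sup>2
                                \<le> t * c z + (1/2) * (norm (x - z))\<^sup>2)"

end

theory Submission
  imports Defs
begin

lemma arith_core:
  fixes F0 F1 Rr D a L nd T \<theta> :: real
  assumes a: "0 < a" and L: "L > 0" and nd: "nd > 0" and T: "T > 0" and th: "\<theta> > 0"
    and D: "D \<le> - nd / (2*T)"
    and desc: "F1 - F0 \<le> a*D + a^2*L/2*nd"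
    and RF: "Rr \<ge> F0"
    and c1: "(F1 - F0)/(a*D) * \<bar>1 - (F1 - Rr)/(a*D)\<bar> \<ge> \<theta>"
    and c2: "F1 - Rr \<ge> - (a^2/2)*L*nd + a*D"
  shows "(F0 - F1)/nd \<ge> \<theta>/(2*L*T^2)"
proof -
  define E where "E = -(a*D)"
  define B where "B = a^2*L*nd/2"
  have "nd / (2*T) > 0" using nd T by simp
  hence Dneg: "D < 0" using D by linarith
  have E: "E > 0" using a Dneg by (simp add: E_def mult_pos_neg)
  have B: "B > 0" using a L nd by (simp add: B_def)
  define \<nu> where "\<nu> = (F0 - F1)/E"
  define lam where "lam = (Rr - F1)/E"
  have nu_eq: "(F1 - F0)/(a*D) = \<nu>" unfolding \<nu>_def E_def by (simp add: divide_simps; auto simp: algebra_simps)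
  have la_eq: "(F1 - Rr)/(a*D) = lam" unfolding lam_def E_def by (simp add: divide_simps; auto simp: algebra_simps)
  have c1': "\<nu> * \<bar>1 - lam\<bar> \<ge> \<theta>" using c1 nu_eq la_eq by simp
  have nupos: "\<nu> > 0"
  proof (rule ccontr)
    assume "\<not> \<nu> > 0" then have "\<nu> * \<bar>1 - lam\<bar> \<le> 0" by (simp add: mult_nonpos_nonneg)
    with c1' th show False by linarith
  qed
  have h1: "F0 - F1 \<ge> E - B" using desc unfolding E_def B_def by (simp add: algebra_simps)
  have h2: "Rr - F1 \<le> E + B" using c2 unfolding E_def B_def by (simp add: algebra_simps)
  have "\<nu> \<ge> 1 - B/E" using h1 E unfolding \<nu>_def by (simp add: divide_simps)
  moreover have "lam \<ge> \<nu>" using RF E unfolding \<nu>_def lam_def by (simp add: divide_right_mono)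
  moreover have "lam \<le> 1 + B/E" using h2 E unfolding lam_def by (simp add: divide_simps)
  ultimately have "\<bar>1 - lam\<bar> \<le> B/E" by linarith
  hence "\<nu> * \<bar>1 - lam\<bar> \<le> \<nu> * (B/E)" by (rule mult_left_mono) (use nupos in auto)
  hence "\<theta> \<le> \<nu> * (B/E)" using c1' by linarith
  hence "\<theta> * E / B \<le> \<nu>" using B E by (simp add: divide_simps mult.commute)
  hence key: "\<theta> * E * E / B \<le> F0 - F1" using E unfolding \<nu>_def by (simp add: divide_simps mult.commute)
  have EB: "E * E / B = 2 * D^2 / (L*nd)" unfolding E_def B_def using a L nd
    by (simp add: divide_simps power2_eq_square)
  have "-D \<ge> nd/(2*T)" using D by linarith
  moreover have "0 \<le> nd/(2*T)" using nd T by simp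
  ultimately have "(nd/(2*T))^2 \<le> (-D)^2" by (rule power_mono)
  hence "D^2 \<ge> (nd/(2*T))^2" by simp
  hence "2 * D^2 / (L*nd) \<ge> 2 * (nd/(2*T))^2 / (L*nd)" using L nd by (simp add: divide_right_mono)
  also have "2 * (nd/(2*T))^2 / (L*nd) = nd / (2*L*T^2)" using L nd T by (simp add: divide_simps power2_eq_square)
  finally have "E*E/B \<ge> nd/(2*L*T^2)" using EB by simp
  hence "\<theta> * (E*E/B) \<ge> \<theta> * (nd/(2*L*T^2))" by (rule mult_left_mono) (use th in auto)
  moreover have "\<theta> * (E*E/B) = \<theta> * E * E / B" by simp
  ultimately have G: "F0 - F1 \<ge> \<theta> * (nd/(2*L*T^2))" using key by linarith
  have "\<theta> * (nd/(2*L*T^2)) / nd = \<theta>/(2*L*T^2)" using nd by simp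
  moreover have "\<theta> * (nd/(2*L*T^2)) / nd \<le> (F0 - F1) / nd" by (rule divide_right_mono) (use G nd in auto)
  ultimately show ?thesis by simp
qed

lemma prox_exists:
  fixes c :: "'a::euclidean_space \<Rightarrow> real"
  assumes cc: "convex_on UNIV c" and t: "t > 0"
  shows "\<exists>y. \<forall>z. t * c y + (1/2) * (norm (w - y))\<^sup>2 \<le> t * c z + (1/2) * (norm (w - z))\<^sup>2"
proof -
  define \<phi> where "\<phi> = (\<lambda>y. t * c y + (1/2) * (norm (w - y))\<^sup>2)"
  have contc: "continuous_on UNIV c" using convex_on_continuous[OF open_UNIV cc] .
  have contphi: "continuous_on UNIV \<phi>" unfolding \<phi>_def
    by (intro continuous_intros contc)
  obtain u0 where u0: "u0 \<in> cball w 1" "\<forall>y\<in>cball w 1. c u0 \<le> c y"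
    using continuous_attains_inf[of "cball w 1" c] contc compact_cball
    by (metis centre_in_cball continuous_on_subset empty_iff top_greatest zero_le_one)
  define m where "m = c u0"
  define M where "M = c w - m"
  have M: "M \<ge> 0" using u0 unfolding M_def m_def by auto
  have lowb: "c y \<ge> c w - norm (y - w) * M" if r1: "norm (y - w) \<ge> 1" for y
  proof -
    define r where "r = norm (y - w)"
    have r: "r \<ge> 1" using r1 r_def by simp
    define u where "u = (1 - 1/r) *\<^sub>R w + (1/r) *\<^sub>R y"
    have "u - w = (1/r) *\<^sub>R (y - w)" unfolding u_def by (simp add: algebra_simps)
    hence "norm (u - w) = 1" using r unfolding r_def by auto
    hence "u \<in> cball w 1" by (simp add: dist_norm norm_minus_commute)
    hence "m \<le> c u" using u0 m_def by auto
    also have "c u \<le> (1 - 1/r) * c w + (1/r) * c y"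
      unfolding u_def by (rule convex_onD[OF cc]) (use r in auto)
    finally have "r * m \<le> r * ((1 - 1/r) * c w + (1/r) * c y)" using r by simp
    hence "r * m \<le> (r - 1) * c w + c y" using r by (simp add: algebra_simps)
    thus ?thesis unfolding M_def r_def[symmetric] by (simp add: algebra_simps)
  qed
  define R where "R = max 1 (2*t*M + 1)"
  obtain y0 where y0: "y0 \<in> cball w R" "\<forall>y\<in>cball w R. \<phi> y0 \<le> \<phi> y"
    using continuous_attains_inf[of "cball w R" \<phi>] contphi compact_cball
    by (metis R_def centre_in_cball continuous_on_subset empty_iff top_greatest le_max_iff_disj zero_le_one order_trans)
  have "\<phi> y0 \<le> \<phi> z" for z
  proof (cases "z \<in> cball w R")
    case True thus ?thesis using y0 by auto
  next
    case False
    define r where "r = norm (z - w)"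
    have rR: "r > R" using False unfolding r_def by (simp add: dist_norm norm_minus_commute)
    hence r1: "r \<ge> 1" and r2: "r > 2*t*M" unfolding R_def by auto
    have "c z \<ge> c w - r * M" using lowb r1 r_def by simp
    hence "t * c z \<ge> t * c w - t * r * M" using t
      by (metis mult.assoc mult_left_mono less_imp_le right_diff_distrib)
    moreover have "(norm (w - z))\<^sup>2 = r^2" unfolding r_def by (simp add: norm_minus_commute)
    moreover have "r^2 > 2 * t * M * r" using r2 r1 by (simp add: power2_eq_square mult_strict_right_mono)
    ultimately have "\<phi> z > t * c w" unfolding \<phi>_def by (simp add: algebra_simps)
    moreover have "\<phi> w = t * c w" unfolding \<phi>_def by simp
    moreover have "\<phi> y0 \<le> \<phi> w" using y0 R_def by auto
    ultimately show ?thesis by linarith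
  qed
  thus ?thesis unfolding \<phi>_def by blast
qed

lemma prox_min:
  fixes c :: "'a::euclidean_space \<Rightarrow> real"
  assumes cc: "convex_on UNIV c" and t: "t > 0"
  shows "t * c (prox c w t) + (1/2) * (norm (w - prox c w t))\<^sup>2 \<le> t * c z + (1/2) * (norm (w - z))\<^sup>2"
  using someI_ex[OF prox_exists[OF cc t, of w]] unfolding prox_def by blast

lemma descent:
  fixes f :: "'a::euclidean_space \<Rightarrow> real"
  assumes f_grad: "\<And>y. (f has_derivative (\<lambda>h. gradf y \<bullet> h)) (at y)"
    and grad_lip: "\<And>y z. norm (gradf y - gradf z) \<le> L * norm (y - z)"
    and a: "0 \<le> a"
  shows "f (x + a *\<^sub>R d) \<le> f x + a * (d \<bullet> gradf x) + a^2 * L / 2 * (norm d)^2"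
proof -
  define g where "g = (\<lambda>s. f (x + s *\<^sub>R d) - s * (d \<bullet> gradf x) - s^2 * L / 2 * (norm d)^2)"
  have der: "(g has_real_derivative (gradf (x + s *\<^sub>R d) \<bullet> d - d \<bullet> gradf x - s * L * (norm d)^2)) (at s)" for s
  proof -
    have h1: "((\<lambda>s. x + s *\<^sub>R d) has_derivative (\<lambda>h. h *\<^sub>R d)) (at s)"
      by (auto intro!: derivative_eq_intros)
    have "((\<lambda>s. f (x + s *\<^sub>R d)) has_derivative (\<lambda>h. gradf (x + s *\<^sub>R d) \<bullet> (h *\<^sub>R d))) (at s)"
      using has_derivative_compose[OF h1 f_grad] by simp
    moreover have "(\<lambda>h. gradf (x + s *\<^sub>R d) \<bullet> (h *\<^sub>R d)) = (*) (gradf (x + s *\<^sub>R d) \<bullet> d)"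
      by (rule ext) simp
    ultimately have "((\<lambda>s. f (x + s *\<^sub>R d)) has_real_derivative (gradf (x + s *\<^sub>R d) \<bullet> d)) (at s)"
      by (simp add: has_field_derivative_def)
    then show ?thesis unfolding g_def
      by (auto intro!: derivative_eq_intros simp: power2_eq_square algebra_simps)
  qed
  have "g a \<le> g 0"
  proof (rule DERIV_nonpos_imp_nonincreasing[OF a])
    fix s assume s: "0 \<le> s" "s \<le> a"
    have "gradf (x + s *\<^sub>R d) \<bullet> d - d \<bullet> gradf x = (gradf (x + s *\<^sub>R d) - gradf x) \<bullet> d"
      by (simp add: inner_diff_left inner_diff_right inner_commute)
    also have "\<dots> \<le> norm (gradf (x + s *\<^sub>R d) - gradf x) * norm d" by (rule norm_cauchy_schwarz)
    also have "\<dots> \<le> (L * norm (s *\<^sub>R d)) * norm d"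
      using grad_lip[of "x + s *\<^sub>R d" x] by (simp add: mult_right_mono)
    also have "\<dots> = s * L * (norm d)^2" using s by (simp add: power2_eq_square)
    finally show "\<exists>y. (g has_real_derivative y) (at s) \<and> y \<le> 0" using der by force
  qed
  thus ?thesis unfolding g_def by simp
qed

theorem mainTheorem4:
  fixes f c :: "'a::euclidean_space \<Rightarrow> real"
    and gradf :: "'a \<Rightarrow> 'a"
    and \<mu> L \<tau>min \<tau>max \<theta> :: real
    and x :: "nat \<Rightarrow> 'a"
    and \<tau> \<alpha> \<eta> :: "nat \<Rightarrow> real"
    and m :: "nat \<Rightarrow> nat" and N k :: nat
  assumes mu_pos: "\<mu> > 0"
    and f_convex: "convex_on UNIV f"
    and f_grad: "\<And>y. (f has_derivative (\<lambda>h. gradf y \<bullet> h)) (at y)"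
    and grad_cont: "continuous_on UNIV gradf"
    and L_pos: "L > 0"
    and grad_lip: "\<And>y z. norm (gradf y - gradf z) \<le> L * norm (y - z)"
    and c_convex: "convex_on UNIV c"
    and tau_bounds: "0 < \<tau>min" "\<tau>min \<le> \<tau> k" "\<tau> k \<le> \<tau>max"
    and N_pos: "N > 0"
    and m0: "m 0 = 0"
    and m_step: "\<And>j. m (Suc j) \<le> min (m j + 1) (N - 1)"
    and eta_range: "\<And>j. 0 \<le> \<eta> j \<and> \<eta> j \<le> 1"
    and d_nz: "prox c (x k - \<tau> k *\<^sub>R gradf (x k)) (\<mu> * \<tau> k) - x k \<noteq> 0"
    and alpha_range: "0 < \<alpha> k" "\<alpha> k \<le> 1"
    and theta_pos: "\<theta> > 0"
    and x_next: "x (Suc k) = x k + \<alpha> k *\<^sub>R (prox c (x k - \<tau> k *\<^sub>R gradf (x k)) (\<mu> * \<tau> k) - x k)"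
    and cond1: "let F = (\<lambda>y. f y + \<mu> * c y);
                    d = prox c (x k - \<tau> k *\<^sub>R gradf (x k)) (\<mu> * \<tau> k) - x k;
                    \<Delta> = d \<bullet> gradf (x k) + \<mu> * (c (x k + d) - c (x k));
                    Fl = Max ((\<lambda>j. F (x (k - j))) ` {0..m k});
                    R = \<eta> k * Fl + (1 - \<eta> k) * F (x k);
                    \<nu> = (F (x (Suc k)) - F (x k)) / (\<alpha> k * \<Delta>);
                    lam = (F (x (Suc k)) - R) / (\<alpha> k * \<Delta>)
                in \<nu> * \<bar>1 - lam\<bar> \<ge> \<theta>"
    and cond2: "let F = (\<lambda>y. f y + \<mu> * c y);
                    d = prox c (x k - \<tau> k *\<^sub>R gradf (x k)) (\<mu> * \<tau> k) - x k;
                    \<Delta> = d \<bullet> gradf (x k) + \<mu> * (c (x k + d) - c (x k));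
                    Fl = Max ((\<lambda>j. F (x (k - j))) ` {0..m k});
                    R = \<eta> k * Fl + (1 - \<eta> k) * F (x k)
                in F (x (Suc k)) - R \<ge> - ((\<alpha> k)\<^sup>2 / 2) * L * (norm d)\<^sup>2 + \<alpha> k * \<Delta>"
  shows "let F = (\<lambda>y. f y + \<mu> * c y);
             d = prox c (x k - \<tau> k *\<^sub>R gradf (x k)) (\<mu> * \<tau> k) - x k
         in (F (x k) - F (x (Suc k))) / (norm d)\<^sup>2 \<ge> \<theta> / (2 * L * \<tau>max\<^sup>2)
            \<and> \<theta> / (2 * L * \<tau>max\<^sup>2) > 0"
  proof -
  define F where "F = (\<lambda>y. f y + \<mu> * c y)"
  define p where "p = prox c (x k - \<tau> k *\<^sub>R gradf (x k)) (\<mu> * \<tau> k)"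
  define d where "d = p - x k"
  define g where "g = gradf (x k)"
  define t where "t = \<tau> k"
  define D where "D = d \<bullet> g + \<mu> * (c (x k + d) - c (x k))"
  define Fl where "Fl = Max ((\<lambda>j. F (x (k - j))) ` {0..m k})"
  define Rr where "Rr = \<eta> k * Fl + (1 - \<eta> k) * F (x k)"
  define nd where "nd = (norm d)^2"
  define a where "a = \<alpha> k"
  have t: "t > 0" "t \<le> \<tau>max" using tau_bounds unfolding t_def by auto
  have Tpos: "\<tau>max > 0" using t by linarith
  have nd: "nd > 0" using d_nz unfolding nd_def d_def p_def by simp
  have a: "0 < a" "a \<le> 1" using alpha_range unfolding a_def by auto
  have xd: "x k + d = p" unfolding d_def by simp
  have pm: "(\<mu> * t) * c p + (1/2) * (norm ((x k - t *\<^sub>R g) - p))\<^sup>2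
      \<le> (\<mu> * t) * c (x k) + (1/2) * (norm ((x k - t *\<^sub>R g) - x k))\<^sup>2"
    unfolding p_def t_def g_def by (rule prox_min[OF c_convex]) (use mu_pos tau_bounds in simp)
  have e1: "(x k - t *\<^sub>R g) - p = - (d + t *\<^sub>R g)" unfolding d_def by (simp add: algebra_simps)
  have e2: "(norm (d + t *\<^sub>R g))\<^sup>2 = nd + 2 * t * (d \<bullet> g) + t^2 * (norm g)^2"
    unfolding nd_def power2_norm_eq_inner
    by (simp add: inner_add_left inner_add_right inner_commute[of g d] power2_eq_square distrib_left)
  have e3: "(norm ((x k - t *\<^sub>R g) - x k))\<^sup>2 = t^2 * (norm g)^2" using t by (simp add: power2_eq_square)
  have "(\<mu> * t) * c p + (1/2) * (nd + 2 * t * (d \<bullet> g) + t^2 * (norm g)^2) \<le> (\<mu> * t) * c (x k) + (1/2) * (t^2 * (norm g)^2)"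
    using pm unfolding e1 norm_minus_cancel e2 e3 .
  hence tD: "t * D \<le> - nd / 2" unfolding D_def xd by (simp add: algebra_simps)
  have Dneg: "D < 0"
  proof (rule ccontr)
    assume "\<not> D < 0" hence "t * D \<ge> 0" using t by simp
    thus False using tD nd by linarith
  qed
  have "\<tau>max * D \<le> t * D" using t Dneg by (simp add: mult_right_mono_neg)
  hence "\<tau>max * D \<le> - nd / 2" using tD by linarith
  hence Dle: "D \<le> - nd / (2 * \<tau>max)" using Tpos by (simp add: divide_simps mult.commute)
  have fd: "f (x k + a *\<^sub>R d) \<le> f (x k) + a * (d \<bullet> g) + a^2 * L / 2 * nd"
    unfolding g_def nd_def by (rule descent[OF f_grad grad_lip]) (use a in simp)
  have "c ((1 - a) *\<^sub>R x k + a *\<^sub>R (x k + d)) \<le> (1 - a) * c (x k) + a * c (x k + d)"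
    by (rule convex_onD[OF c_convex]) (use a in auto)
  moreover have "(1 - a) *\<^sub>R x k + a *\<^sub>R (x k + d) = x k + a *\<^sub>R d" by (simp add: algebra_simps)
  ultimately have cd: "c (x k + a *\<^sub>R d) \<le> c (x k) + a * (c (x k + d) - c (x k))" by (simp add: algebra_simps)
  have xs: "x (Suc k) = x k + a *\<^sub>R d" using x_next unfolding a_def d_def p_def by simp
  have "\<mu> * c (x k + a *\<^sub>R d) \<le> \<mu> * (c (x k) + a * (c (x k + d) - c (x k)))"
    using cd mu_pos by simp
  hence desc: "F (x (Suc k)) - F (x k) \<le> a * D + a^2 * L / 2 * nd"
    using fd unfolding F_def xs D_def by (simp add: algebra_simps)
  have "F (x k) \<in> (\<lambda>j. F (x (k - j))) ` {0..m k}" by (rule image_eqI[of _ _ 0]) auto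
  hence "F (x k) \<le> Fl" unfolding Fl_def by (intro Max_ge) auto
  hence "\<eta> k * (Fl - F (x k)) \<ge> 0" using eta_range[of k] by simp
  moreover have "Rr = F (x k) + \<eta> k * (Fl - F (x k))" unfolding Rr_def by (simp add: algebra_simps)
  ultimately have RF: "Rr \<ge> F (x k)" by linarith
  have c1: "(F (x (Suc k)) - F (x k)) / (a * D) * \<bar>1 - (F (x (Suc k)) - Rr) / (a * D)\<bar> \<ge> \<theta>"
    using cond1 unfolding Let_def F_def p_def d_def g_def D_def Fl_def Rr_def a_def nd_def .
  have c2: "F (x (Suc k)) - Rr \<ge> - (a^2/2)*L*nd + a*D"
    using cond2 unfolding Let_def F_def p_def d_def g_def D_def Fl_def Rr_def a_def nd_def .
  have main: "(F (x k) - F (x (Suc k))) / nd \<ge> \<theta> / (2 * L * \<tau>max^2)"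
    by (rule arith_core[OF a(1) L_pos nd Tpos theta_pos Dle desc RF c1 c2])
  have pos: "\<theta> / (2 * L * \<tau>max^2) > 0" using theta_pos L_pos Tpos by simp
  show ?thesis unfolding Let_def F_def[symmetric] p_def[symmetric] d_def[symmetric] nd_def[symmetric]
    using main pos by simp
qed

end
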